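(* Let $X$ be a finite connected poset of length $1$. If $|\mathrm{Min}(X)|>1$ and $|\mathrm{Max}(X)|>1$, then there are two disjoint maximal chains $C,D$ in $X$.
   Context: The length of $X$ is the maximum of $|C|-1$ over chains $C\subseteq X$. $\mathrm{Min}(X)$ and $\mathrm{Max}(X)$ are the sets of minimal and maximal elements of $X$. $X$ is connected if any two elements are joined by a sequence of elements with consecutive ones comparable. *)

theory Defs
  imports Main
begin

definition is_chain :: "'a::order set \<Rightarrow> 'a set \<Rightarrow> bool" where
  "is_chain X C \<longleftrightarrow> C \<subseteq> X \<and> (\<forall>x\<in>C. \<forall>y\<in>C. x \<le> y \<or> y \<le> x)"

definition maximal_chain :: "'a::order set \<Rightarrow> 'a set \<Rightarrow> bool" where
  "maximal_chain X C \<longleftrightarrow> is_chain X C \<and> (\<forall>D. is_chain X D \<and> C \<subseteq> D \<longrightarrow> D = C)"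

definition poset_length :: "'a::order set \<Rightarrow> nat" where
  "poset_length X = Max {card C - 1 | C. is_chain X C}"

definition Min_elems :: "'a::order set \<Rightarrow> 'a set" where
  "Min_elems X = {x \<in> X. \<not> (\<exists>y\<in>X. y < x)}"

definition Max_elems :: "'a::order set \<Rightarrow> 'a set" where
  "Max_elems X = {x \<in> X. \<not> (\<exists>y\<in>X. x < y)}"

definition comparable_rel :: "'a::order set \<Rightarrow> ('a \<times> 'a) set" where
  "comparable_rel X = {(x, y). x \<in> X \<and> y \<in> X \<and> (x \<le> y \<or> y \<le> x)}"

definition poset_connected :: "'a::order set \<Rightarrow> bool" where
  "poset_connected X \<longleftrightarrow> (\<forall>x\<in>X. \<forall>y\<in>X. (x, y) \<in> (comparable_rel X)\<^sup>*)"

end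

theory Submission
  imports Defs
begin

lemma no3:
  fixes X :: "'a::order set"
  assumes "finite X" "poset_length X = 1" "x \<in> X" "y \<in> X" "z \<in> X" "x < y" "y < z"
  shows False
proof -
  have ch: "is_chain X {x,y,z}" using assms unfolding is_chain_def by auto
  have fin: "finite {card C - 1 | C. is_chain X C}"
  proof -
    have "{card C - 1 | C. is_chain X C} \<subseteq> (\<lambda>C. card C - 1) ` Pow X"
      unfolding is_chain_def by auto
    thus ?thesis using assms(1) finite_subset by blast
  qed
  have "card {x,y,z} - 1 \<le> poset_length X"
    unfolding poset_length_def using ch fin by (intro Max_ge) auto
  moreover have "x \<noteq> z" using assms by auto
  then have "card {x,y,z} = 3" using assms by auto
  ultimately show False using assms(2) by simp
qed

lemma chain_le2:
  fixes X :: "'a::order set"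
  assumes "finite X" "poset_length X = 1" "is_chain X D"
  shows "card D \<le> 2"
proof -
  have fin: "finite {card C - 1 | C. is_chain X C}"
  proof -
    have "{card C - 1 | C. is_chain X C} \<subseteq> (\<lambda>C. card C - 1) ` Pow X"
      unfolding is_chain_def by auto
    thus ?thesis using assms(1) finite_subset by blast
  qed
  have "card D - 1 \<le> poset_length X"
    unfolding poset_length_def using assms(3) fin by (intro Max_ge) auto
  thus ?thesis using assms(2) by simp
qed

lemma edge_max:
  fixes X :: "'a::order set"
  assumes "finite X" "poset_length X = 1" "a \<in> X" "b \<in> X" "a < b"
  shows "maximal_chain X {a,b}"
  unfolding maximal_chain_def
proof (intro conjI allI impI)
  show "is_chain X {a,b}" using assms unfolding is_chain_def by auto
  fix D assume h: "is_chain X D \<and> {a, b} \<subseteq> D"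
  have "finite D" using h assms(1) unfolding is_chain_def using finite_subset by blast
  moreover have "card D \<le> 2" using chain_le2 assms h by blast
  moreover have "card {a,b} = 2" using assms by auto
  ultimately show "D = {a,b}" using h by (metis card_seteq)
qed

lemma has_nb:
  fixes X :: "'a::order set"
  assumes "poset_connected X" "x \<in> X" "w \<in> X" "w \<noteq> x"
  shows "\<exists>y\<in>X. y \<noteq> x \<and> (x \<le> y \<or> y \<le> x)"
proof (rule ccontr)
  assume n: "\<not> ?thesis"
  have "(x, w) \<in> (comparable_rel X)\<^sup>*" using assms unfolding poset_connected_def by auto
  then have "w = x"
  proof (induction rule: rtrancl_induct)
    case base then show ?case by simp
  next
    case (step y z) then show ?case using n unfolding comparable_rel_def by auto
  qed
  thus False using assms by simp
qed

lemma two: "card A > 1 \<Longrightarrow> \<exists>a b. a \<in> A \<and> b \<in> A \<and> a \<noteq> b"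
  by (metis One_nat_def card.infinite card_le_Suc0_iff_eq not_le not_one_less_zero)

theorem lemma4p5:
  fixes X :: "'a::order set"
  assumes "finite X"
    and "poset_connected X"
    and "poset_length X = 1"
    and "card (Min_elems X) > 1"
    and "card (Max_elems X) > 1"
  shows "\<exists>C D. maximal_chain X C \<and> maximal_chain X D \<and> C \<inter> D = {}"
proof -
  obtain m1 m2 where m: "m1 \<in> Min_elems X" "m2 \<in> Min_elems X" "m1 \<noteq> m2"
    using two[OF assms(4)] by blast
  obtain M1 M2 where M: "M1 \<in> Max_elems X" "M2 \<in> Max_elems X" "M1 \<noteq> M2"
    using two[OF assms(5)] by blast
  have mX: "m1 \<in> X" "m2 \<in> X" "\<And>y. y \<in> X \<Longrightarrow> \<not> y < m1" "\<And>y. y \<in> X \<Longrightarrow> \<not> y < m2"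
    using m unfolding Min_elems_def by auto
  have MX: "M1 \<in> X" "M2 \<in> X" "\<And>y. y \<in> X \<Longrightarrow> \<not> M1 < y" "\<And>y. y \<in> X \<Longrightarrow> \<not> M2 < y"
    using M unfolding Max_elems_def by auto
  obtain a where a: "a \<in> X" "m1 < a"
    using has_nb[OF assms(2) mX(1) mX(2)] m(3) mX(3) by (metis order.not_eq_order_implies_strict)
  obtain b where b: "b \<in> X" "m2 < b"
    using has_nb[OF assms(2) mX(2) mX(1)] m(3) mX(4) by (metis order.not_eq_order_implies_strict)
  note E = edge_max[OF assms(1) assms(3)]
  note N = no3[OF assms(1) assms(3)]
  show ?thesis
  proof (cases "a = b")
    case False
    have "{m1,a} \<inter> {m2,b} = {}" using False m(3) a b mX by auto
    thus ?thesis using E a b mX by blast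
  next
    case True
    obtain c where c: "c \<in> X" "\<And>y. y \<in> X \<Longrightarrow> \<not> c < y" "c \<noteq> a"
      using M MX by metis
    obtain y where y: "y \<in> X" "y < c"
      using has_nb[OF assms(2) c(1) a(1) c(3)[symmetric]] c(2) by (metis order.not_eq_order_implies_strict)
    show ?thesis
    proof (cases "y = m1")
      case False
      have "{m1,a} \<inter> {y,c} = {}" using False a c y mX N by auto
      thus ?thesis using E a c y mX by blast
    next
      case yy: True
      have "{m1,c} \<inter> {m2,a} = {}" using True a b c y yy mX m(3) by auto
      thus ?thesis using E a b c y yy mX True by blast
    qed
  qed
qed

end
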